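(* For $k\in\mathbb N$, $k\ge1$, define $H_k(g,J)=\frac1k\Re\operatorname{tr}(J^k)$ and $\tilde H_k(g,J)=\frac1k\Im\operatorname{tr}(J^k)$ on $\mathfrak M$. All these functions pairwise Poisson commute with respect to both $\{\ ,\ \}_1$ and $\{\ ,\ \}_2$, and for every $k$ one has $$\{\,\cdot\,,H_k\}_2=\{\,\cdot\,,H_{k+1}\}_1,\qquad \{\,\cdot\,,\tilde H_k\}_2=\{\,\cdot\,,\tilde H_{k+1}\}_1 .$$ The Hamiltonian flow of $H_k$ with respect to $\{\ ,\ \}_2$ (equivalently of $H_{k+1}$ with respect to $\{\ ,\ \}_1$) through $(g(0),J(0))$ is $(g(t),J(t))=(\exp(J(0)^kt)\,g(0),J(0))$, and that of $\tilde H_k$ with respect to $\{\ ,\ \}_2$ (equivalently of $\tilde H_{k+1}$ with respect to $\{\ ,\ \}_1$) is $(g(t),J(t))=(\exp(-\mathrm i J(0)^kt)\,g(0),J(0))$.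
   Context: $G=\mathrm{GL}(n,\mathbb C)$ is regarded as a real Lie group with Lie algebra $\mathcal G=\mathfrak{gl}(n,\mathbb C)$ regarded as a real Lie algebra, equipped with the bilinear form $\langle X,Y\rangle=\Re\operatorname{tr}(XY)$. Every $X\in\mathcal G$ decomposes uniquely as $X=X_>+X_0+X_<$ (strictly upper triangular, diagonal, strictly lower triangular parts). Set $r(X)=\frac12(X_>-X_<)$, $r_\pm=r\pm\frac12\mathrm{id}$. Let $\mathfrak M=G\times\mathcal G=\{(g,J)\}$. For $F\in C^\infty(\mathfrak M,\mathbb R)$ define $\mathcal G$-valued derivatives by $\langle\nabla_1F(g,J),X\rangle=\frac{d}{dt}\big|_{t=0}F(e^{tX}g,J)$, $\langle\nabla_1'F(g,J),X\rangle=\frac{d}{dt}\big|_{t=0}F(ge^{tX},J)$, $\langle d_2F(g,J),X\rangle=\frac{d}{dt}\big|_{t=0}F(g,J+tX)$ for all $X\in\mathcal G$, and $\nabla_2F=J\,d_2F$, $\nabla_2'F=(d_2F)\,J$. The Poisson brackets are $\{F,H\}_1=\langle \nabla_1F,d_2H\rangle-\langle\nabla_1H,d_2F\rangle+\langle J,[d_2F,d_2H]\rangle$ and $\{F,H\}_2=\langle r\nabla_1F,\nabla_1H\rangle-\langle r\nabla_1'F,\nabla_1'H\rangle+\langle \nabla_2F-\nabla_2'F, r_+\nabla_2'H-r_-\nabla_2H\rangle+\langle\nabla_1F, r_+\nabla_2'H-r_-\nabla_2H\rangle-\langle\nabla_1H, r_+\nabla_2'F-r_-\nabla_2F\rangle$.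 The Hamiltonian flow of $H$ w.r.t. a bracket $\{\ ,\ \}$ is the flow of the vector field $F\mapsto\{F,H\}$. *)

theory Defs
  imports "HOL-Analysis.Analysis"
begin

type_synonym 'n cmat = "complex^'n^'n"

definition idm :: "'n::finite cmat" where "idm = mat 1"

fun mpow :: "'n::finite cmat \<Rightarrow> nat \<Rightarrow> 'n cmat" where
  "mpow A 0 = idm"
| "mpow A (Suc m) = A ** mpow A m"

definition mexp :: "'n::finite cmat \<Rightarrow> 'n cmat" where
  "mexp A = (\<Sum>m. (1 / fact m) *\<^sub>R mpow A m)"

definition csc :: "complex \<Rightarrow> 'n::finite cmat \<Rightarrow> 'n cmat" where
  "csc c A = (\<chi> i j. c * A $ i $ j)"

definition pair :: "'n::finite cmat \<Rightarrow> 'n cmat \<Rightarrow> real" where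
  "pair X Y = Re (trace (X ** Y))"

definition upper :: "'n::{finite,linorder} cmat \<Rightarrow> 'n cmat" where
  "upper X = (\<chi> i j. if i < j then X $ i $ j else 0)"

definition lower :: "'n::{finite,linorder} cmat \<Rightarrow> 'n cmat" where
  "lower X = (\<chi> i j. if j < i then X $ i $ j else 0)"

definition rmap :: "'n::{finite,linorder} cmat \<Rightarrow> 'n cmat" where
  "rmap X = (1/2::real) *\<^sub>R (upper X - lower X)"

definition rplus :: "'n::{finite,linorder} cmat \<Rightarrow> 'n cmat" where
  "rplus X = rmap X + (1/2::real) *\<^sub>R X"

definition rminus :: "'n::{finite,linorder} cmat \<Rightarrow> 'n cmat" where
  "rminus X = rmap X - (1/2::real) *\<^sub>R X"

definition comm :: "'n::finite cmat \<Rightarrow> 'n cmat \<Rightarrow> 'n cmat" where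
  "comm X Y = X ** Y - Y ** X"

definition Mspace :: "('n::finite cmat \<times> 'n cmat) set" where
  "Mspace = {(g, J). invertible g}"

text \<open>Smooth (C-infinity) real functions on an open set: differentiable, and all
  directional derivatives again smooth.\<close>
coinductive smooth_on :: "'a::real_normed_vector set \<Rightarrow> ('a \<Rightarrow> real) \<Rightarrow> bool" where
  "\<lbrakk>open U; \<forall>x\<in>U. F differentiable (at x);
    \<forall>v. smooth_on U (\<lambda>x. frechet_derivative F (at x) v)\<rbrakk> \<Longrightarrow> smooth_on U F"

definition mgrad :: "('n::finite cmat \<Rightarrow> real \<Rightarrow> real) \<Rightarrow> 'n cmat" where
  "mgrad \<phi> = (THE Y. \<forall>X. (\<phi> X has_real_derivative pair Y X) (at 0))"

definition nabla1 :: "('n::finite cmat \<times> 'n cmat \<Rightarrow> real) \<Rightarrow> 'n cmat \<Rightarrow> 'n cmat \<Rightarrow> 'n cmat" where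
  "nabla1 F g J = mgrad (\<lambda>X t. F (mexp (t *\<^sub>R X) ** g, J))"

definition nabla1' :: "('n::finite cmat \<times> 'n cmat \<Rightarrow> real) \<Rightarrow> 'n cmat \<Rightarrow> 'n cmat \<Rightarrow> 'n cmat" where
  "nabla1' F g J = mgrad (\<lambda>X t. F (g ** mexp (t *\<^sub>R X), J))"

definition d2 :: "('n::finite cmat \<times> 'n cmat \<Rightarrow> real) \<Rightarrow> 'n cmat \<Rightarrow> 'n cmat \<Rightarrow> 'n cmat" where
  "d2 F g J = mgrad (\<lambda>X t. F (g, J + t *\<^sub>R X))"

definition nabla2 :: "('n::finite cmat \<times> 'n cmat \<Rightarrow> real) \<Rightarrow> 'n cmat \<Rightarrow> 'n cmat \<Rightarrow> 'n cmat" where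
  "nabla2 F g J = J ** d2 F g J"

definition nabla2' :: "('n::finite cmat \<times> 'n cmat \<Rightarrow> real) \<Rightarrow> 'n cmat \<Rightarrow> 'n cmat \<Rightarrow> 'n cmat" where
  "nabla2' F g J = d2 F g J ** J"

definition PB1 :: "('n::finite cmat \<times> 'n cmat \<Rightarrow> real) \<Rightarrow> ('n cmat \<times> 'n cmat \<Rightarrow> real)
    \<Rightarrow> 'n cmat \<times> 'n cmat \<Rightarrow> real" where
  "PB1 F H p = (case p of (g, J) \<Rightarrow>
      pair (nabla1 F g J) (d2 H g J) - pair (nabla1 H g J) (d2 F g J)
      + pair J (comm (d2 F g J) (d2 H g J)))"

definition PB2 :: "('n::{finite,linorder} cmat \<times> 'n cmat \<Rightarrow> real) \<Rightarrow> ('n cmat \<times> 'n cmat \<Rightarrow> real)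
    \<Rightarrow> 'n cmat \<times> 'n cmat \<Rightarrow> real" where
  "PB2 F H p = (case p of (g, J) \<Rightarrow>
      pair (rmap (nabla1 F g J)) (nabla1 H g J)
      - pair (rmap (nabla1' F g J)) (nabla1' H g J)
      + pair (nabla2 F g J - nabla2' F g J)
             (rplus (nabla2' H g J) - rminus (nabla2 H g J))
      + pair (nabla1 F g J) (rplus (nabla2' H g J) - rminus (nabla2 H g J))
      - pair (nabla1 H g J) (rplus (nabla2' F g J) - rminus (nabla2 F g J)))"

text \<open>gamma is an integral curve of the Hamiltonian vector field F \<mapsto> PB F H
  (for a bracket PB) through p0, defined for all real times.\<close>
definition ham_flow_curve ::
  "(('n::finite cmat \<times> 'n cmat \<Rightarrow> real) \<Rightarrow> ('n cmat \<times> 'n cmat \<Rightarrow> real) \<Rightarrow> 'n cmat \<times> 'n cmat \<Rightarrow> real)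
   \<Rightarrow> ('n cmat \<times> 'n cmat \<Rightarrow> real) \<Rightarrow> 'n cmat \<times> 'n cmat \<Rightarrow> (real \<Rightarrow> 'n cmat \<times> 'n cmat) \<Rightarrow> bool" where
  "ham_flow_curve PB H p0 \<gamma> \<longleftrightarrow> \<gamma> 0 = p0 \<and> (\<forall>t. \<gamma> t \<in> Mspace) \<and>
     (\<forall>F t. smooth_on Mspace F \<longrightarrow>
        ((\<lambda>s. F (\<gamma> s)) has_real_derivative PB F H (\<gamma> t)) (at t))"

definition Hk :: "nat \<Rightarrow> 'n::finite cmat \<times> 'n cmat \<Rightarrow> real" where
  "Hk k p = (1 / real k) * Re (trace (mpow (snd p) k))"

definition Htk :: "nat \<Rightarrow> 'n::finite cmat \<times> 'n cmat \<Rightarrow> real" where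
  "Htk k p = (1 / real k) * Im (trace (mpow (snd p) k))"

end

theory Submission
  imports Defs
begin


typedef ('n::finite) endo = "UNIV :: ((complex^'n) \<Rightarrow>\<^sub>L (complex^'n)) set" by simp
setup_lifting type_definition_endo

instantiation endo :: (finite) real_normed_vector
begin
lift_definition zero_endo :: "'a endo" is 0 .
lift_definition plus_endo :: "'a endo \<Rightarrow> 'a endo \<Rightarrow> 'a endo" is "(+)" .
lift_definition minus_endo :: "'a endo \<Rightarrow> 'a endo \<Rightarrow> 'a endo" is "(-)" .
lift_definition uminus_endo :: "'a endo \<Rightarrow> 'a endo" is uminus .
lift_definition scaleR_endo :: "real \<Rightarrow> 'a endo \<Rightarrow> 'a endo" is scaleR .
lift_definition norm_endo :: "'a endo \<Rightarrow> real" is norm .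
definition dist_endo :: "'a endo \<Rightarrow> 'a endo \<Rightarrow> real" where "dist_endo a b = norm (a - b)"
definition uniformity_endo :: "('a endo \<times> 'a endo) filter" where
  "uniformity_endo = (INF e\<in>{0 <..}. principal {(x, y). dist x y < e})"
definition open_endo :: "'a endo set \<Rightarrow> bool" where
  "open_endo S = (\<forall>x\<in>S. \<forall>\<^sub>F (x', y) in uniformity. x' = x \<longrightarrow> y \<in> S)"
definition sgn_endo :: "'a endo \<Rightarrow> 'a endo" where "sgn_endo x = scaleR (inverse (norm x)) x"
instance
  apply standard
  unfolding dist_endo_def open_endo_def sgn_endo_def uniformity_endo_def
  apply (rule refl | (transfer, force simp: algebra_simps norm_triangle_ineq))+
  done
end

instantiation endo :: (finite) real_normed_algebra_1
begin
lift_definition times_endo :: "'a endo \<Rightarrow> 'a endo \<Rightarrow> 'a endo" is "(o\<^sub>L)" .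
lift_definition one_endo :: "'a endo" is id_blinfun .
instance
  apply standard
  apply (transfer; auto intro!: blinfun_eqI simp: blinfun.bilinear_simps norm_blinfun_compose)+
    apply (metis norm_blinfun_id norm_zero zero_neq_one)
   apply transfer apply (rule norm_blinfun_compose)
  apply transfer apply simp
  done
end

lemma dist_Rep_endo: "dist (Rep_endo a) (Rep_endo b) = dist a b"
  by (simp add: dist_endo_def dist_norm norm_endo.rep_eq minus_endo.rep_eq)

instance endo :: (finite) banach
proof
  fix X :: "nat \<Rightarrow> 'a endo"
  assume "Cauchy X"
  then have "Cauchy (\<lambda>n. Rep_endo (X n))" by (simp add: Cauchy_def dist_Rep_endo)
  then obtain L where "(\<lambda>n. Rep_endo (X n)) \<longlonglongrightarrow> L" using convergent_def Cauchy_convergent_iff by blast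
  then have "X \<longlonglongrightarrow> Abs_endo L"
    by (simp add: lim_sequentially dist_Rep_endo[symmetric] Abs_endo_inverse)
  then show "convergent X" by (auto simp: convergent_def)
qed

lift_definition Phi :: "'a::finite cmat \<Rightarrow> 'a endo" is "\<lambda>A. Blinfun (\<lambda>v. A *v v)" .

definition Psi :: "'a::finite endo \<Rightarrow> 'a cmat" where
  "Psi E = (\<chi> i j. (blinfun_apply (Rep_endo E) (axis j 1)) $ i)"

lemma Phi_apply: "blinfun_apply (Rep_endo (Phi A)) v = A *v v"
  by (simp add: Phi.rep_eq bounded_linear_Blinfun_apply)

lemma mv_axis: "((A::'a::finite cmat) *v axis j 1) $ i = A $ i $ j"
  by (simp add: matrix_vector_mult_def axis_def if_distrib cong: if_cong)

lemma Psi_Phi[simp]: "Psi (Phi A) = A"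
  by (simp add: Psi_def Phi_apply mv_axis vec_eq_iff)

lemma Phi_inj: "Phi A = Phi B \<Longrightarrow> A = B"
  by (metis Psi_Phi)

lemma Phi_mult: "Phi (A ** B) = Phi A * Phi B"
  apply (rule Rep_endo_inject[THEN iffD1])
  apply (rule blinfun_eqI)
  by (simp add: times_endo.rep_eq Phi_apply matrix_vector_mul_assoc)

lemma Phi_idm: "Phi idm = 1"
  apply (rule Rep_endo_inject[THEN iffD1])
  apply (rule blinfun_eqI)
  by (simp add: one_endo.rep_eq Phi_apply idm_def)

lemma Phi_add: "Phi (A + B) = Phi A + Phi B"
  apply (rule Rep_endo_inject[THEN iffD1])
  apply (rule blinfun_eqI)
  by (simp add: plus_endo.rep_eq plus_blinfun.rep_eq Phi_apply matrix_vector_mult_add_rdistrib)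

lemma Phi_scaleR: "Phi (r *\<^sub>R A) = r *\<^sub>R Phi A"
  apply (rule Rep_endo_inject[THEN iffD1])
  apply (rule blinfun_eqI)
  by (simp add: scaleR_endo.rep_eq scaleR_blinfun.rep_eq Phi_apply vec_eq_iff matrix_vector_mult_def scaleR_sum_right)

lemma bl_Phi: "bounded_linear (Phi :: 'a::finite cmat \<Rightarrow> 'a endo)"
  apply (rule linear_conv_bounded_linear[THEN iffD1])
  by (rule linearI) (simp_all add: Phi_add Phi_scaleR)

lemma norm_vec_le_sum: "norm (x::'b::real_normed_vector^'n::finite) \<le> (\<Sum>i\<in>UNIV. norm (x$i))"
  by (simp add: norm_vec_def L2_set_le_sum)

lemma bl_Psi: "bounded_linear (Psi :: 'a::finite endo \<Rightarrow> 'a cmat)"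
proof
  show "Psi (x + y) = Psi x + Psi y" for x y :: "'a endo"
    by (simp add: Psi_def plus_endo.rep_eq plus_blinfun.rep_eq vec_eq_iff)
  show "Psi (r *\<^sub>R x) = r *\<^sub>R Psi x" for r and x :: "'a endo"
    by (simp add: Psi_def scaleR_endo.rep_eq scaleR_blinfun.rep_eq vec_eq_iff)
  show "\<exists>K. \<forall>x::'a endo. norm (Psi x) \<le> norm x * K"
  proof (intro exI allI)
    fix x :: "'a endo"
    have "norm (Psi x) \<le> (\<Sum>i\<in>UNIV. norm (Psi x $ i))" by (rule norm_vec_le_sum)
    also have "\<dots> \<le> (\<Sum>i\<in>(UNIV::'a set). \<Sum>j\<in>(UNIV::'a set). norm x)"
    proof (rule sum_mono)
      fix i
      have "norm (Psi x $ i) \<le> (\<Sum>j\<in>UNIV. norm (Psi x $ i $ j))" by (rule norm_vec_le_sum)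
      also have "\<dots> \<le> (\<Sum>j\<in>(UNIV::'a set). norm x)"
      proof (rule sum_mono)
        fix j
        have "norm (Psi x $ i $ j) \<le> norm (blinfun_apply (Rep_endo x) (axis j 1))"
          by (simp add: Psi_def, rule Finite_Cartesian_Product.norm_nth_le)
        also have "\<dots> \<le> norm (Rep_endo x) * norm (axis j (1::complex))" by (rule norm_blinfun)
        finally show "norm (Psi x $ i $ j) \<le> norm x" by (simp add: norm_endo.rep_eq)
      qed
      finally show "norm (Psi x $ i) \<le> (\<Sum>j\<in>(UNIV::'a set). norm x)" .
    qed
    finally show "norm (Psi x) \<le> norm x * (real CARD('a) * real CARD('a))" by (simp add: mult_ac)
  qed
qed

lemma Phi_mpow: "Phi (mpow A m) = Phi A ^ m"
  by (induction m) (simp_all add: Phi_idm Phi_mult)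

lemma mexp_sums: "(\<lambda>m. (1 / fact m) *\<^sub>R mpow A m) sums Psi (exp (Phi A))"
proof -
  have "(\<lambda>m. Phi A ^ m /\<^sub>R fact m) sums exp (Phi A)"
    unfolding exp_def by (rule summable_exp_generic[THEN summable_sums])
  from bounded_linear.sums[OF bl_Psi this]
  show ?thesis
    by (simp add: linear_scale[OF bounded_linear.linear[OF bl_Psi]] Phi_mpow[symmetric] divide_inverse_commute)
qed

lemma mexp_Psi: "mexp A = Psi (exp (Phi A))"
  unfolding mexp_def using mexp_sums sums_unique by metis

lemma Phi_mexp: "Phi (mexp A) = exp (Phi A)"
proof -
  have "(\<lambda>m. Phi ((1 / fact m) *\<^sub>R mpow A m)) sums Phi (mexp A)"
    using bounded_linear.sums[OF bl_Phi mexp_sums] mexp_Psi by metis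
  moreover have "(\<lambda>m. Phi ((1 / fact m) *\<^sub>R mpow A m)) sums exp (Phi A)"
    using summable_exp_generic[THEN summable_sums, of "Phi A"]
    by (simp add: Phi_scaleR Phi_mpow exp_def divide_inverse_commute)
  ultimately show ?thesis using sums_unique2 by blast
qed




lemma Phi_zero: "Phi 0 = 0"
  using linear_0[OF bounded_linear.linear[OF bl_Phi]] .

lemma Phi_uminus: "Phi (- X) = - Phi X"
  using linear_neg[OF bounded_linear.linear[OF bl_Phi]] .

lemma madd_r: "((A::complex^'m::finite^'n::finite) + B) ** (C::complex^'p::finite^'m) = A ** C + B ** C"
  by (simp add: vec_eq_iff matrix_matrix_mult_def distrib_right sum.distrib)

lemma msub_r: "((A::'n::finite cmat) - B) ** C = A ** C - B ** C"
  by (simp add: vec_eq_iff matrix_matrix_mult_def left_diff_distrib sum_subtractf)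

lemma msub_l: "(C::'n::finite cmat) ** (A - B) = C ** A - C ** B"
  by (simp add: vec_eq_iff matrix_matrix_mult_def right_diff_distrib sum_subtractf)

lemma mexp_zero: "mexp 0 = idm"
  by (rule Phi_inj) (simp add: Phi_mexp Phi_zero Phi_idm)

lemma mexp_sc: "mexp (t *\<^sub>R C) = Psi (exp (t *\<^sub>R Phi C))"
  by (simp add: mexp_Psi Phi_scaleR)

lemma mexp_deriv: "((\<lambda>s. mexp (s *\<^sub>R C)) has_vector_derivative (C ** mexp (t *\<^sub>R C))) (at t)"
proof -
  have "((\<lambda>s. Psi (exp (s *\<^sub>R Phi C))) has_vector_derivative Psi (Phi C * exp (t *\<^sub>R Phi C))) (at t)"
    by (rule bounded_linear.has_vector_derivative[OF bl_Psi exp_scaleR_has_vector_derivative_left])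
  moreover have "Psi (Phi C * exp (t *\<^sub>R Phi C)) = C ** mexp (t *\<^sub>R C)"
    by (metis Phi_mexp Phi_mult Phi_scaleR Psi_Phi)
  ultimately show ?thesis by (simp add: mexp_sc)
qed

lemma mexp_inv: "mexp (t *\<^sub>R C) ** mexp ((-t) *\<^sub>R C) = idm"
proof (rule Phi_inj)
  have "exp (t *\<^sub>R Phi C) * exp ((-t) *\<^sub>R Phi C) = exp (t *\<^sub>R Phi C + (-t) *\<^sub>R Phi C)"
    by (rule exp_add_commuting[symmetric]) (simp add: algebra_simps)
  then show "Phi (mexp (t *\<^sub>R C) ** mexp ((-t) *\<^sub>R C)) = Phi idm"
    by (simp add: Phi_mult Phi_mexp Phi_scaleR Phi_idm Phi_uminus)
qed

lemma invertible_mexp: "invertible (mexp (t *\<^sub>R C))"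
  using mexp_inv[of t C] invertible_right_inverse unfolding idm_def by blast

lemma smul_left: "(r *\<^sub>R (A::complex^'m::finite^'n::finite)) ** (B::complex^'p::finite^'m) = r *\<^sub>R (A ** B)"
  by (simp add: vec_eq_iff matrix_matrix_mult_def scaleR_sum_right)

lemma smul_right: "(A::complex^'m::finite^'n::finite) ** (r *\<^sub>R (B::complex^'p::finite^'m)) = r *\<^sub>R (A ** B)"
  by (simp add: vec_eq_iff matrix_matrix_mult_def scaleR_sum_right)

lemma bl_rmult: "bounded_linear (\<lambda>M::'n::finite cmat. M ** (g::'n cmat))"
  apply (rule linear_conv_bounded_linear[THEN iffD1])
  by (rule linearI) (simp_all add: madd_r smul_left)

lemma bbl_mult: "bounded_bilinear ((**) :: 'n::finite cmat \<Rightarrow> 'n cmat \<Rightarrow> 'n cmat)"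
  apply (rule bilinear_conv_bounded_bilinear[THEN iffD1])
  unfolding bilinear_def
  by (auto intro!: linearI simp: madd_r matrix_add_ldistrib smul_left smul_right)

lemma chain_real:
  assumes "(\<gamma> has_vector_derivative v) (at t)" "(F has_derivative L) (at (\<gamma> t))"
  shows "((\<lambda>s. F (\<gamma> s)) has_real_derivative L v) (at t)"
proof -
  have "((\<lambda>s. F (\<gamma> s)) has_derivative (\<lambda>h. L (h *\<^sub>R v))) (at t)"
    using has_derivative_compose[OF assms(1)[unfolded has_vector_derivative_def] assms(2)] .
  moreover have "(\<lambda>h. L (h *\<^sub>R v)) = (*) (L v)"
    using linear_scale[OF has_derivative_linear[OF assms(2)]] by (auto simp: mult.commute)
  ultimately show ?thesis by (simp add: has_field_derivative_def)
qed

definition T :: "'n::finite cmat \<Rightarrow> 'n cmat" where "T Y = (\<chi> a b. cnj (Y $ b $ a))"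

lemma TT[simp]: "T (T Y) = Y" by (simp add: T_def vec_eq_iff)

lemma pair_inner: "pair Y X = inner (T Y) X"
  apply (simp add: pair_def trace_def matrix_matrix_mult_def inner_vec_def T_def inner_complex_def)
  apply (subst sum.swap)
  apply (simp add: Re_sum)
  done

lemma pair_inj: "(\<And>X. pair A X = pair B X) \<Longrightarrow> A = B"
proof -
  assume h: "\<And>X. pair A X = pair B X"
  have "inner (T A - T B) (T A - T B) = 0"
    using h[of "T A - T B"] by (simp add: pair_inner inner_diff_left)
  then have "T A = T B" by simp
  then show "A = B" by (metis TT)
qed

lemma pair_repr: "linear (l :: 'n::finite cmat \<Rightarrow> real) \<Longrightarrow> \<exists>Y. \<forall>X. l X = pair Y X"
proof -
  assume lin: "linear l"
  show ?thesis
  proof (intro exI allI)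
    fix X
    have "l X = inner (l X) 1" by simp
    also have "\<dots> = inner X (adjoint l 1)" by (rule adjoint_works[OF lin, symmetric])
    also have "\<dots> = pair (T (adjoint l 1)) X" by (simp add: pair_inner inner_commute)
    finally show "l X = pair (T (adjoint l 1)) X" .
  qed
qed

lemma mgrad_eq:
  assumes "\<And>X. (\<phi> X has_real_derivative pair Y X) (at 0)"
  shows "mgrad \<phi> = Y"
  unfolding mgrad_def
proof (rule the_equality)
  show "\<forall>X. (\<phi> X has_real_derivative pair Y X) (at 0)" using assms by blast
  fix Y' assume "\<forall>X. (\<phi> X has_real_derivative pair Y' X) (at 0)"
  then have "\<And>X. pair Y' X = pair Y X" using assms DERIV_unique by blast
  then show "Y' = Y" by (rule pair_inj)
qed

lemma mgrad_lin:
  assumes "linear l" "\<And>X. (\<phi> X has_real_derivative l X) (at 0)"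
  shows "pair (mgrad \<phi>) X = l X"
proof -
  obtain Y where Y: "\<And>X. l X = pair Y X" using pair_repr[OF assms(1)] by blast
  have "mgrad \<phi> = Y" by (rule mgrad_eq) (metis assms(2) Y)
  then show ?thesis by (simp add: Y)
qed



lemma idm_l[simp]: "idm ** (A::'n::finite cmat) = A" by (simp add: idm_def)
lemma idm_r[simp]: "(A::'n::finite cmat) ** idm = A" by (simp add: idm_def)

lemma mpow_Suc_right: "mpow A (Suc m) = mpow A m ** A"
  by (induction m) (simp_all add: matrix_mul_assoc)

lemma mpow_comm: "A ** mpow A m = mpow A m ** A"
  by (metis mpow.simps(2) mpow_Suc_right)

lemma mpow_comm2: "mpow A a ** mpow A b = mpow A b ** mpow A a"
proof (induction a)
  case 0 then show ?case by simp
next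
  case (Suc a)
  have "mpow A (Suc a) ** mpow A b = A ** (mpow A a ** mpow A b)" by (simp add: matrix_mul_assoc)
  also have "\<dots> = (A ** mpow A b) ** mpow A a" by (simp add: Suc matrix_mul_assoc)
  also have "\<dots> = mpow A b ** (A ** mpow A a)" by (metis mpow_comm matrix_mul_assoc)
  finally show ?case by simp
qed

lemma csc_1[simp]: "csc 1 A = A" by (simp add: csc_def vec_eq_iff)
lemma csc_mult_l: "csc c A ** B = csc c (A ** B)"
  by (simp add: csc_def vec_eq_iff matrix_matrix_mult_def sum_distrib_left mult_ac)
lemma csc_mult_r: "A ** csc c B = csc c (A ** B)"
  by (simp add: csc_def vec_eq_iff matrix_matrix_mult_def sum_distrib_left mult_ac)
lemma csc_cc: "csc c (csc d A) = csc (c * d) A" by (simp add: csc_def vec_eq_iff mult_ac)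
lemma trace_csc: "trace (csc c A) = c * trace A"
  by (simp add: csc_def trace_def sum_distrib_left)
lemma csc_real: "csc (c * complex_of_real t) A = t *\<^sub>R csc c A"
  apply (simp add: csc_def vec_eq_iff)
  apply (simp add: scaleR_conv_of_real)
  done
lemma trace_scaleR: "trace (r *\<^sub>R (A::'n::finite cmat)) = r *\<^sub>R trace A"
  by (simp add: trace_def scaleR_sum_right)

lemma mzero_l[simp]: "(0::'n::finite cmat) ** A = 0" by (simp add: vec_eq_iff matrix_matrix_mult_def)
lemma mzero_r[simp]: "(A::'n::finite cmat) ** 0 = 0" by (simp add: vec_eq_iff matrix_matrix_mult_def)
lemma trace_zero[simp]: "trace (0::'n::finite cmat) = 0" by (simp add: trace_def)
lemma pair_0l[simp]: "pair 0 X = 0" by (simp add: pair_def)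
lemma pair_0r[simp]: "pair X 0 = 0" by (simp add: pair_def)
lemma rmap_0[simp]: "rmap 0 = 0" by (simp add: rmap_def upper_def lower_def vec_eq_iff)
lemma rpm[simp]: "rplus Z - rminus Z = Z"
  by (simp add: rplus_def rminus_def algebra_simps scaleR_2[symmetric] del: scaleR_2)

lemma comm_csc_pow: "comm (csc c (mpow J a)) (csc d (mpow J b)) = 0"
  by (simp add: comm_def csc_mult_l csc_mult_r csc_cc mpow_comm2[of J a b] mult.commute)

lemma tr1: "P ** J = J ** P \<Longrightarrow> trace ((J ** D) ** P) = trace ((D ** J) ** (P::'n::finite cmat))"
  by (metis matrix_mul_assoc trace_mul_sym)

lemma tr2: "Z ** J = J ** Z \<Longrightarrow> trace (J ** (D ** Z)) = trace (J ** ((Z::'n::finite cmat) ** D))"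
  by (metis matrix_mul_assoc trace_mul_sym)

definition goodH :: "('n::finite cmat \<times> 'n cmat \<Rightarrow> real) \<Rightarrow> complex \<Rightarrow> nat \<Rightarrow> bool" where
  "goodH H c m \<longleftrightarrow> (\<forall>g J. nabla1 H g J = 0 \<and> nabla1' H g J = 0 \<and> d2 H g J = csc c (mpow J m))"

lemma PB1_HH: "goodH H c m \<Longrightarrow> goodH H' c' m' \<Longrightarrow> PB1 H H' (g, J) = 0"
  by (simp add: goodH_def PB1_def comm_csc_pow)

lemma PB2_HH: "goodH H c m \<Longrightarrow> goodH H' c' m' \<Longrightarrow> PB2 H H' (g, J) = 0"
  by (simp add: goodH_def PB2_def nabla2_def nabla2'_def csc_mult_l csc_mult_r mpow_comm)

lemma PB2_FH: assumes "goodH H c m"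
  shows "PB2 F H (g, J) = pair (nabla1 F g J) (csc c (mpow J (Suc m)))"
proof -
  let ?P = "mpow J (Suc m)"
  have n2: "nabla2 H g J = csc c ?P" "nabla2' H g J = csc c ?P"
    using assms by (simp_all add: goodH_def nabla2_def nabla2'_def csc_mult_l csc_mult_r mpow_Suc_right[symmetric])
  have cP: "?P ** J = J ** ?P" by (rule mpow_comm[symmetric])
  have eq: "trace ((J ** d2 F g J) ** ?P) = trace ((d2 F g J ** J) ** ?P)" by (rule tr1[OF cP])
  have "pair (nabla2 F g J - nabla2' F g J) (csc c ?P) = 0"
    unfolding pair_def nabla2_def nabla2'_def csc_mult_r trace_csc msub_r trace_sub eq by simp
  then show ?thesis using assms n2 by (simp add: PB2_def goodH_def)
qed

lemma PB1_FH: assumes "goodH H c (Suc m)"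
  shows "PB1 F H (g, J) = pair (nabla1 F g J) (csc c (mpow J (Suc m)))"
proof -
  let ?Z = "csc c (mpow J (Suc m))"
  have "?Z ** J = J ** ?Z" by (metis csc_mult_l csc_mult_r mpow_comm)
  from tr2[OF this] have "pair J (comm (d2 F g J) ?Z) = 0"
    unfolding pair_def comm_def msub_l trace_sub by simp
  then show ?thesis using assms by (simp add: PB1_def goodH_def)
qed



lemma mpow_deriv:
  "\<exists>D. ((\<lambda>t. mpow (J + t *\<^sub>R X) m) has_vector_derivative D) (at 0) \<and>
       (\<forall>B. B ** J = J ** B \<longrightarrow> trace (D ** B) = of_nat m * trace (X ** mpow J (m - 1) ** B))"
proof (induction m)
  case 0
  show ?case by (rule exI[of _ 0]) (simp add: has_vector_derivative_const)
next
  case (Suc m)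
  then obtain D where D: "((\<lambda>t. mpow (J + t *\<^sub>R X) m) has_vector_derivative D) (at 0)"
    and tD: "\<And>B. B ** J = J ** B \<Longrightarrow> trace (D ** B) = of_nat m * trace (X ** mpow J (m - 1) ** B)"
    by blast
  have f: "((\<lambda>t. J + t *\<^sub>R X) has_vector_derivative X) (at 0)"
    by (auto intro!: derivative_eq_intros)
  have "((\<lambda>t. (J + t *\<^sub>R X) ** mpow (J + t *\<^sub>R X) m) has_vector_derivative
          ((J + 0 *\<^sub>R X) ** D + X ** mpow (J + 0 *\<^sub>R X) m)) (at 0)"
    using bounded_bilinear.has_vector_derivative[OF bbl_mult f D] by simp
  then have d: "((\<lambda>t. mpow (J + t *\<^sub>R X) (Suc m)) has_vector_derivative (J ** D + X ** mpow J m)) (at 0)"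
    by simp
  have "trace ((J ** D + X ** mpow J m) ** B) = of_nat (Suc m) * trace (X ** mpow J (Suc m - 1) ** B)"
    if B: "B ** J = J ** B" for B
  proof -
    have BJ: "(B ** J) ** J = J ** (B ** J)" using B by (metis matrix_mul_assoc)
    have "trace ((J ** D) ** B) = trace (D ** (B ** J))"
      by (metis matrix_mul_assoc trace_mul_sym)
    also have "\<dots> = of_nat m * trace (X ** mpow J (m - 1) ** (B ** J))" by (rule tD[OF BJ])
    also have "\<dots> = of_nat m * trace (X ** mpow J m ** B)"
    proof (cases m)
      case 0 then show ?thesis by simp
    next
      case (Suc m')
      have "mpow J m' ** (B ** J) = mpow J m ** B"
        using B by (metis Suc matrix_mul_assoc mpow_Suc_right)
      then show ?thesis by (simp add: Suc matrix_mul_assoc[symmetric])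
    qed
    finally show ?thesis by (simp add: madd_r trace_add algebra_simps)
  qed
  with d show ?case by blast
qed

lemma lin_trRe: "linear (\<lambda>M::'n::finite cmat. a * Re (trace M))"
  by (rule linearI) (simp_all add: trace_add trace_scaleR algebra_simps)
lemma lin_trIm: "linear (\<lambda>M::'n::finite cmat. a * Im (trace M))"
  by (rule linearI) (simp_all add: trace_add trace_scaleR algebra_simps)

lemma d2_Hk: fixes g J :: "'n::finite cmat" assumes "k \<ge> 1" shows "d2 (Hk k) g J = mpow J (k - 1)"
  unfolding d2_def
proof (rule mgrad_eq)
  fix X :: "'n cmat"
  obtain D where D: "((\<lambda>t. mpow (J + t *\<^sub>R X) k) has_vector_derivative D) (at 0)"
    and tD: "\<And>B. B ** J = J ** B \<Longrightarrow> trace (D ** B) = of_nat k * trace (X ** mpow J (k - 1) ** B)"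
    using mpow_deriv by blast
  have tr: "trace D = of_nat k * trace (X ** mpow J (k - 1))" using tD[of idm] by simp
  have "((\<lambda>t. (1 / real k) * Re (trace (mpow (J + t *\<^sub>R X) k))) has_vector_derivative (1 / real k) * Re (trace D)) (at 0)"
    using bounded_linear.has_vector_derivative[OF linear_conv_bounded_linear[THEN iffD1, OF lin_trRe] D] .
  moreover have "(1 / real k) * Re (trace D) = pair (mpow J (k - 1)) X"
    using assms by (simp add: tr pair_def trace_mul_sym[of X])
  ultimately show "((\<lambda>t. Hk k (g, J + t *\<^sub>R X)) has_real_derivative pair (mpow J (k - 1)) X) (at 0)"
    by (simp add: Hk_def has_real_derivative_iff_has_vector_derivative)
qed

lemma d2_Htk: fixes g J :: "'n::finite cmat" assumes "k \<ge> 1" shows "d2 (Htk k) g J = csc (- \<i>) (mpow J (k - 1))"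
  unfolding d2_def
proof (rule mgrad_eq)
  fix X :: "'n cmat"
  obtain D where D: "((\<lambda>t. mpow (J + t *\<^sub>R X) k) has_vector_derivative D) (at 0)"
    and tD: "\<And>B. B ** J = J ** B \<Longrightarrow> trace (D ** B) = of_nat k * trace (X ** mpow J (k - 1) ** B)"
    using mpow_deriv by blast
  have tr: "trace D = of_nat k * trace (X ** mpow J (k - 1))" using tD[of idm] by simp
  have "((\<lambda>t. (1 / real k) * Im (trace (mpow (J + t *\<^sub>R X) k))) has_vector_derivative (1 / real k) * Im (trace D)) (at 0)"
    using bounded_linear.has_vector_derivative[OF linear_conv_bounded_linear[THEN iffD1, OF lin_trIm] D] .
  moreover have "(1 / real k) * Im (trace D) = pair (csc (- \<i>) (mpow J (k - 1))) X"
    using assms by (simp add: tr pair_def csc_mult_l trace_csc trace_mul_sym[of X])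
  ultimately show "((\<lambda>t. Htk k (g, J + t *\<^sub>R X)) has_real_derivative pair (csc (- \<i>) (mpow J (k - 1))) X) (at 0)"
    by (simp add: Htk_def has_real_derivative_iff_has_vector_derivative)
qed

lemma good_Hk: "k \<ge> 1 \<Longrightarrow> goodH (Hk k) 1 (k - 1)"
  unfolding goodH_def
  by (auto simp: d2_Hk nabla1_def nabla1'_def intro!: mgrad_eq) (simp_all add: Hk_def)

lemma good_Htk: "k \<ge> 1 \<Longrightarrow> goodH (Htk k) (- \<i>) (k - 1)"
  unfolding goodH_def
  by (auto simp: d2_Htk nabla1_def nabla1'_def intro!: mgrad_eq) (simp_all add: Htk_def)



lemma flow_PB:
  fixes g0 J0 C :: "'n::finite cmat"
  assumes "F differentiable (at (mexp (t *\<^sub>R C) ** g0, J0))"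
  shows "((\<lambda>s. F (mexp (s *\<^sub>R C) ** g0, J0)) has_real_derivative
            pair (nabla1 F (mexp (t *\<^sub>R C) ** g0) J0) C) (at t)"
proof -
  define g where "g = mexp (t *\<^sub>R C) ** g0"
  define L where "L = frechet_derivative F (at (g, J0))"
  have hL: "(F has_derivative L) (at (g, J0))"
    using assms frechet_derivative_works g_def L_def by blast
  have linL: "linear L" using has_derivative_linear[OF hL] .
  have c1: "((\<lambda>s. (mexp (s *\<^sub>R C) ** g0, J0)) has_vector_derivative (C ** g, 0)) (at t)"
    using has_vector_derivative_Pair[OF bounded_linear.has_vector_derivative[OF bl_rmult mexp_deriv]
        has_vector_derivative_const[of J0]]
    by (simp add: g_def matrix_mul_assoc)
  have d1: "((\<lambda>s. F (mexp (s *\<^sub>R C) ** g0, J0)) has_real_derivative L (C ** g, 0)) (at t)"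
    using chain_real[OF c1] hL g_def by simp
  have d2: "((\<lambda>e. F (mexp (e *\<^sub>R X) ** g, J0)) has_real_derivative L (X ** g, 0)) (at 0)" for X
  proof -
    have c2: "((\<lambda>e. (mexp (e *\<^sub>R X) ** g, J0)) has_vector_derivative (X ** g, 0)) (at 0)"
      using has_vector_derivative_Pair[OF bounded_linear.has_vector_derivative[OF bl_rmult[of g] mexp_deriv[of X 0]]
          has_vector_derivative_const[of J0]]
      by (simp add: mexp_zero)
    show ?thesis using chain_real[OF c2] hL by (simp add: mexp_zero)
  qed
  have lin: "linear (\<lambda>X. L (X ** g, 0))"
  proof (rule linearI)
    fix X Y :: "'n cmat" and r :: real
    show "L ((X + Y) ** g, 0) = L (X ** g, 0) + L (Y ** g, 0)"
      using linear_add[OF linL, of "(X ** g, 0)" "(Y ** g, 0)"] by (simp add: madd_r)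
    show "L ((r *\<^sub>R X) ** g, 0) = r *\<^sub>R L (X ** g, 0)"
      using linear_scale[OF linL, of r "(X ** g, 0)"] by (simp add: smul_left)
  qed
  have "pair (nabla1 F g J0) C = L (C ** g, 0)"
    unfolding nabla1_def by (rule mgrad_lin[OF lin d2])
  then show ?thesis using d1 g_def by simp
qed

lemma ham_curve:
  fixes g0 J0 C :: "'n::finite cmat"
  assumes "invertible g0" and "\<And>F g. PB F H (g, J0) = pair (nabla1 F g J0) C"
  shows "ham_flow_curve PB H (g0, J0) (\<lambda>t. (mexp (t *\<^sub>R C) ** g0, J0))"
  unfolding ham_flow_curve_def
proof (intro conjI allI impI)
  show "(mexp (0 *\<^sub>R C) ** g0, J0) = (g0, J0)" by (simp add: mexp_zero)
  show "(mexp (t *\<^sub>R C) ** g0, J0) \<in> Mspace" for t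
    by (auto simp: Mspace_def intro!: invertible_mult invertible_mexp assms(1))
  fix F :: "'n cmat \<times> 'n cmat \<Rightarrow> real" and t :: real
  assume "smooth_on Mspace F"
  then have "\<forall>x\<in>Mspace. F differentiable (at x)" by (cases rule: smooth_on.cases) auto
  moreover have "(mexp (t *\<^sub>R C) ** g0, J0) \<in> Mspace"
    by (auto simp: Mspace_def intro!: invertible_mult invertible_mexp assms(1))
  ultimately have "F differentiable (at (mexp (t *\<^sub>R C) ** g0, J0))" by blast
  from flow_PB[OF this] show "((\<lambda>s. F (mexp (s *\<^sub>R C) ** g0, J0)) has_real_derivative
          PB F H (mexp (t *\<^sub>R C) ** g0, J0)) (at t)"
    by (simp add: assms(2))
qed

theorem proposition2p3:
  fixes dummy :: "'n::{finite,linorder}"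
  shows
  "(\<forall>k l. k \<ge> 1 \<longrightarrow> l \<ge> 1 \<longrightarrow>
      (\<forall>p\<in>(Mspace :: ('n cmat \<times> 'n cmat) set).
         PB1 (Hk k) (Hk l) p = 0 \<and> PB1 (Hk k) (Htk l) p = 0 \<and> PB1 (Htk k) (Hk l) p = 0 \<and> PB1 (Htk k) (Htk l) p = 0 \<and>
         PB2 (Hk k) (Hk l) p = 0 \<and> PB2 (Hk k) (Htk l) p = 0 \<and> PB2 (Htk k) (Hk l) p = 0 \<and> PB2 (Htk k) (Htk l) p = 0))
   \<and> (\<forall>k. k \<ge> 1 \<longrightarrow> (\<forall>F. smooth_on (Mspace :: ('n cmat \<times> 'n cmat) set) F \<longrightarrow>
        (\<forall>p\<in>Mspace. PB2 F (Hk k) p = PB1 F (Hk (k+1)) p \<and>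
                     PB2 F (Htk k) p = PB1 F (Htk (k+1)) p)))
   \<and> (\<forall>k. k \<ge> 1 \<longrightarrow> (\<forall>g0 J0 :: 'n cmat. invertible g0 \<longrightarrow>
        ham_flow_curve PB2 (Hk k) (g0, J0) (\<lambda>t. (mexp (t *\<^sub>R mpow J0 k) ** g0, J0)) \<and>
        ham_flow_curve PB1 (Hk (k+1)) (g0, J0) (\<lambda>t. (mexp (t *\<^sub>R mpow J0 k) ** g0, J0)) \<and>
        ham_flow_curve PB2 (Htk k) (g0, J0)
           (\<lambda>t. (mexp (csc (- \<i> * complex_of_real t) (mpow J0 k)) ** g0, J0)) \<and>
        ham_flow_curve PB1 (Htk (k+1)) (g0, J0)
           (\<lambda>t. (mexp (csc (- \<i> * complex_of_real t) (mpow J0 k)) ** g0, J0))))"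
proof (intro conjI allI impI ballI)
  fix k l :: nat and p :: "'n cmat \<times> 'n cmat"
  assume k: "k \<ge> 1" and l: "l \<ge> 1"
  obtain g J where p: "p = (g, J)" by (cases p)
  note G = good_Hk[OF k] good_Htk[OF k] good_Hk[OF l] good_Htk[OF l]
  show "PB1 (Hk k) (Hk l) p = 0" "PB1 (Hk k) (Htk l) p = 0" "PB1 (Htk k) (Hk l) p = 0"
       "PB1 (Htk k) (Htk l) p = 0" "PB2 (Hk k) (Hk l) p = 0" "PB2 (Hk k) (Htk l) p = 0"
       "PB2 (Htk k) (Hk l) p = 0" "PB2 (Htk k) (Htk l) p = 0"
    unfolding p using G by (auto intro: PB1_HH PB2_HH)
next
  fix k :: nat and F and p :: "'n cmat \<times> 'n cmat"
  assume k: "k \<ge> 1"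
  obtain g J where p: "p = (g, J)" by (cases p)
  have s: "Suc (k - 1) = k" using k by simp
  have k1: "k + 1 \<ge> 1" by simp
  have gg: "goodH (Hk (k+1)) 1 (Suc (k-1))" using good_Hk[OF k1] s by simp
  have gg': "goodH (Htk (k+1)) (- \<i>) (Suc (k-1))" using good_Htk[OF k1] s by simp
  show "PB2 F (Hk k) p = PB1 F (Hk (k + 1)) p"
    unfolding p using PB2_FH[OF good_Hk[OF k], of F g J] PB1_FH[OF gg, of F g J] by simp
  show "PB2 F (Htk k) p = PB1 F (Htk (k + 1)) p"
    unfolding p using PB2_FH[OF good_Htk[OF k], of F g J] PB1_FH[OF gg', of F g J] by simp
next
  fix k :: nat and g0 J0 :: "'n cmat"
  assume k: "k \<ge> 1" and g0: "invertible g0"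
  have s: "Suc (k - 1) = k" using k by simp
  have k1: "k + 1 \<ge> 1" by simp
  have curve: "(\<lambda>t. (mexp (csc (- \<i> * complex_of_real t) (mpow J0 k)) ** g0, J0))
      = (\<lambda>t. (mexp (t *\<^sub>R csc (- \<i>) (mpow J0 k)) ** g0, J0))"
    by (simp only: csc_real)
  have gg: "goodH (Hk (k+1)) 1 (Suc (k-1))" using good_Hk[OF k1] s by simp
  have gg': "goodH (Htk (k+1)) (- \<i>) (Suc (k-1))" using good_Htk[OF k1] s by simp
  show "ham_flow_curve PB2 (Hk k) (g0, J0) (\<lambda>t. (mexp (t *\<^sub>R mpow J0 k) ** g0, J0))"
    by (rule ham_curve[OF g0]) (simp only: PB2_FH[OF good_Hk[OF k]] s csc_1)
  show "ham_flow_curve PB1 (Hk (k + 1)) (g0, J0) (\<lambda>t. (mexp (t *\<^sub>R mpow J0 k) ** g0, J0))"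
    by (rule ham_curve[OF g0]) (simp only: PB1_FH[OF gg] s csc_1)
  show "ham_flow_curve PB2 (Htk k) (g0, J0)
           (\<lambda>t. (mexp (csc (- \<i> * complex_of_real t) (mpow J0 k)) ** g0, J0))"
    unfolding curve by (rule ham_curve[OF g0]) (simp only: PB2_FH[OF good_Htk[OF k]] s)
  show "ham_flow_curve PB1 (Htk (k + 1)) (g0, J0)
           (\<lambda>t. (mexp (csc (- \<i> * complex_of_real t) (mpow J0 k)) ** g0, J0))"
    unfolding curve by (rule ham_curve[OF g0]) (simp only: PB1_FH[OF gg'] s)
qed


end
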